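(* Let $\mathfrak{A}[\tau]$ be a semi-associative topological partial *-algebra with multiplication core $\mathfrak{B}$. Then $\mathfrak{A}^+(\mathfrak{B})\subseteq\mathfrak{A}^+_{\rm top}\subseteq\mathfrak{A}^+_{\mathcal{M}}$ for every $\mathcal{M}\subseteq\mathcal{P}_{\mathfrak{B}}(\mathfrak{A})$.
   Context: A partial *-algebra is a complex vector space $\mathfrak{A}$ with conjugate-linear involution and distributive partial multiplication on $\Gamma\subset\mathfrak{A}\times\mathfrak{A}$ with $(x,y)\in\Gamma$ iff $(y^*,x^* )\in\Gamma$, then $(xy)^*=y^*x^*$; $L(y)=\{x:(x,y)\in\Gamma\}$, $R(x)=\{y:(x,y)\in\Gamma\}$; $R\mathfrak{A}$ is the set of universal right multipliers. Semi-associative: $y\in R(x)$ implies $yz\in R(x)$ and $(xy)z=x(yz)$ for all $z\in R\mathfrak{A}$. A topological partial *-algebra: Hausdorff locally convex topology $\tau$ such that each map $y\in R(x)\mapsto xy$ is closed. $\tau^*$ is given by seminorms $\max\{p(x),p(x^* )\}$. A multiplication core is a subspace $\mathfrak{B}\subseteq R\mathfrak{A}$ with: $e\in\mathfrak{B}$ if a unit $e$ exists; $\mathfrak{B}\mathfrak{B}\subseteq\mathfrak{B}$; $\mathfrak{B}$ $\tau^*$-dense; $x\mapsto xb$ $\tau$-continuous for $b\in\mathfrak{B}$; $b^*(xc)=(b^*x)c$. An ips-form with core $\mathfrak{B}$ is a positive sesquilinear form $\varphi$ on $\mathfrak{A}\times\mathfrak{A}$ with $\mathfrak{B}\subset R\mathfrak{A}$,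 $\{x+N_\varphi:x\in\mathfrak{B}\}$ dense in the completion of $\mathfrak{A}/N_\varphi$ ($N_\varphi=\{x:\varphi(x,x)=0\}$), $\varphi(xa,b)=\varphi(a,x^*b)$ ($x\in\mathfrak{A}$, $a,b\in\mathfrak{B}$) and $\varphi(x^*a,yb)=\varphi(a,(xy)b)$ ($x\in L(y)$, $a,b\in\mathfrak{B}$). $\mathcal{P}_{\mathfrak{B}}(\mathfrak{A})$ is the set of ips-forms with core $\mathfrak{B}$ that are $\tau$-continuous ($|\varphi(x,y)|\le p(x)p(y)$ for a continuous seminorm $p$). $\mathfrak{A}^+(\mathfrak{B})$ is the $\tau$-closure of $\{\sum_{k=1}^n x_k^*x_k:x_k\in\mathfrak{B},n\in\mathbb{N}\}$; $\mathfrak{A}^+_{\rm top}$ is the $\tau$-closure of $\{\sum_{k=1}^n x_k^*x_k:x_k\in R\mathfrak{A},n\in\mathbb{N}\}$; for $\mathcal{M}\subseteq\mathcal{P}_{\mathfrak{B}}(\mathfrak{A})$, $\mathfrak{A}^+_{\mathcal{M}}=\{x\in\mathfrak{A}:\varphi(xa,a)\ge0\ \forall\varphi\in\mathcal{M},a\in\mathfrak{B}\}$. *)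

theory Defs
  imports "HOL-Analysis.Analysis" "HOL-Library.Complex_Order"
begin

text \<open>The complex vector space structure on the carrier type 'a is given explicitly by a
  scalar multiplication sc (HOL has no class of complex vector spaces).\<close>

definition cvs :: "(complex \<Rightarrow> 'a::ab_group_add \<Rightarrow> 'a) \<Rightarrow> bool" where
  "cvs sc \<longleftrightarrow> (\<forall>x. sc 1 x = x) \<and> (\<forall>a b x. sc (a * b) x = sc a (sc b x))
     \<and> (\<forall>a b x. sc (a + b) x = sc a x + sc b x) \<and> (\<forall>a x y. sc a (x + y) = sc a x + sc a y)"

definition seminorm :: "(complex \<Rightarrow> 'a::ab_group_add \<Rightarrow> 'a) \<Rightarrow> ('a \<Rightarrow> real) \<Rightarrow> bool" where
  "seminorm sc p \<longleftrightarrow> (\<forall>x y. p (x + y) \<le> p x + p y) \<and> (\<forall>c x. p (sc c x) = cmod c * p x)"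

definition seminorm_topology :: "('a::ab_group_add \<Rightarrow> real) set \<Rightarrow> 'a topology" where
  "seminorm_topology P = topology (\<lambda>U. \<forall>x\<in>U. \<exists>F. finite F \<and> F \<subseteq> P \<and>
       (\<exists>e>0. {y. \<forall>p\<in>F. p (y - x) < e} \<subseteq> U))"

definition star_topology :: "('a \<Rightarrow> 'a) \<Rightarrow> ('a::ab_group_add \<Rightarrow> real) set \<Rightarrow> 'a topology" where
  "star_topology invol P = seminorm_topology ((\<lambda>p x. max (p x) (p (invol x))) ` P)"

definition RM :: "('a \<times> 'a) set \<Rightarrow> 'a set" where
  "RM \<Gamma> = {y. \<forall>x. (x, y) \<in> \<Gamma>}"

definition partial_star_algebra ::
  "(complex \<Rightarrow> 'a::ab_group_add \<Rightarrow> 'a) \<Rightarrow> ('a \<Rightarrow> 'a) \<Rightarrow> ('a \<times> 'a) set \<Rightarrow> ('a \<Rightarrow> 'a \<Rightarrow> 'a) \<Rightarrow> bool" where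
  "partial_star_algebra sc invol \<Gamma> mul \<longleftrightarrow>
     cvs sc
   \<and> (\<forall>x. invol (invol x) = x)
   \<and> (\<forall>a b x y. invol (sc a x + sc b y) = sc (cnj a) (invol x) + sc (cnj b) (invol y))
   \<and> (\<forall>x y. (x, y) \<in> \<Gamma> \<longleftrightarrow> (invol y, invol x) \<in> \<Gamma>)
   \<and> (\<forall>x y. (x, y) \<in> \<Gamma> \<longrightarrow> invol (mul x y) = mul (invol y) (invol x))
   \<and> (\<forall>x y z a b. (x, y) \<in> \<Gamma> \<longrightarrow> (x, z) \<in> \<Gamma> \<longrightarrow>
        (x, sc a y + sc b z) \<in> \<Gamma> \<and> mul x (sc a y + sc b z) = sc a (mul x y) + sc b (mul x z))
   \<and> (\<forall>x y z a b. (y, x) \<in> \<Gamma> \<longrightarrow> (z, x) \<in> \<Gamma> \<longrightarrow>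
        (sc a y + sc b z, x) \<in> \<Gamma> \<and> mul (sc a y + sc b z) x = sc a (mul y x) + sc b (mul z x))"

definition semi_associative :: "('a \<times> 'a) set \<Rightarrow> ('a \<Rightarrow> 'a \<Rightarrow> 'a) \<Rightarrow> bool" where
  "semi_associative \<Gamma> mul \<longleftrightarrow> (\<forall>x y z. (x, y) \<in> \<Gamma> \<longrightarrow> z \<in> RM \<Gamma> \<longrightarrow>
      (x, mul y z) \<in> \<Gamma> \<and> mul (mul x y) z = mul x (mul y z))"

text \<open>Topological partial *-algebra: the topology tau is the (Hausdorff, locally convex)
  topology generated by a separating family P of seminorms, and each multiplication
  map y in R(x) to xy is closed (closed graph).\<close>
definition top_partial_star_algebra ::
  "(complex \<Rightarrow> 'a::ab_group_add \<Rightarrow> 'a) \<Rightarrow> ('a \<Rightarrow> 'a) \<Rightarrow> ('a \<times> 'a) set \<Rightarrow> ('a \<Rightarrow> 'a \<Rightarrow> 'a)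
     \<Rightarrow> ('a \<Rightarrow> real) set \<Rightarrow> bool" where
  "top_partial_star_algebra sc invol \<Gamma> mul P \<longleftrightarrow>
     partial_star_algebra sc invol \<Gamma> mul
   \<and> (\<forall>p\<in>P. seminorm sc p)
   \<and> (\<forall>x. x \<noteq> 0 \<longrightarrow> (\<exists>p\<in>P. p x \<noteq> 0))
   \<and> (\<forall>x. closedin (prod_topology (seminorm_topology P) (seminorm_topology P))
                     {(y, mul x y) | y. (x, y) \<in> \<Gamma>})"

definition is_unit :: "('a \<times> 'a) set \<Rightarrow> ('a \<Rightarrow> 'a \<Rightarrow> 'a) \<Rightarrow> 'a \<Rightarrow> bool" where
  "is_unit \<Gamma> mul e \<longleftrightarrow> (\<forall>x. (e, x) \<in> \<Gamma> \<and> (x, e) \<in> \<Gamma> \<and> mul e x = x \<and> mul x e = x)"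

definition multiplication_core ::
  "(complex \<Rightarrow> 'a::ab_group_add \<Rightarrow> 'a) \<Rightarrow> ('a \<Rightarrow> 'a) \<Rightarrow> ('a \<times> 'a) set \<Rightarrow> ('a \<Rightarrow> 'a \<Rightarrow> 'a)
     \<Rightarrow> ('a \<Rightarrow> real) set \<Rightarrow> 'a set \<Rightarrow> bool" where
  "multiplication_core sc invol \<Gamma> mul P B \<longleftrightarrow>
     B \<subseteq> RM \<Gamma>
   \<and> 0 \<in> B \<and> (\<forall>a b x y. x \<in> B \<longrightarrow> y \<in> B \<longrightarrow> sc a x + sc b y \<in> B)
   \<and> (\<forall>e. is_unit \<Gamma> mul e \<longrightarrow> e \<in> B)
   \<and> (\<forall>a\<in>B. \<forall>b\<in>B. mul a b \<in> B)
   \<and> (star_topology invol P) closure_of B = UNIV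
   \<and> (\<forall>b\<in>B. continuous_map (seminorm_topology P) (seminorm_topology P) (\<lambda>x. mul x b))
   \<and> (\<forall>b\<in>B. \<forall>c\<in>B. \<forall>x. mul (invol b) (mul x c) = mul (mul (invol b) x) c)"

definition ips_form ::
  "(complex \<Rightarrow> 'a::ab_group_add \<Rightarrow> 'a) \<Rightarrow> ('a \<Rightarrow> 'a) \<Rightarrow> ('a \<times> 'a) set \<Rightarrow> ('a \<Rightarrow> 'a \<Rightarrow> 'a)
     \<Rightarrow> 'a set \<Rightarrow> ('a \<Rightarrow> 'a \<Rightarrow> complex) \<Rightarrow> bool" where
  "ips_form sc invol \<Gamma> mul B \<phi> \<longleftrightarrow>
     (\<forall>a b x y z. \<phi> (sc a x + sc b y) z = a * \<phi> x z + b * \<phi> y z)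
   \<and> (\<forall>a b x y z. \<phi> x (sc a y + sc b z) = cnj a * \<phi> x y + cnj b * \<phi> x z)
   \<and> (\<forall>x. 0 \<le> \<phi> x x)
   \<and> B \<subseteq> RM \<Gamma>
   \<and> (\<forall>x. \<forall>e>0. \<exists>b\<in>B. Re (\<phi> (x - b) (x - b)) < e)
   \<and> (\<forall>x. \<forall>a\<in>B. \<forall>b\<in>B. \<phi> (mul x a) b = \<phi> a (mul (invol x) b))
   \<and> (\<forall>x y. (x, y) \<in> \<Gamma> \<longrightarrow> (\<forall>a\<in>B. \<forall>b\<in>B. \<phi> (mul (invol x) a) (mul y b) = \<phi> a (mul (mul x y) b)))"

definition PB ::
  "(complex \<Rightarrow> 'a::ab_group_add \<Rightarrow> 'a) \<Rightarrow> ('a \<Rightarrow> 'a) \<Rightarrow> ('a \<times> 'a) set \<Rightarrow> ('a \<Rightarrow> 'a \<Rightarrow> 'a)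
     \<Rightarrow> ('a \<Rightarrow> real) set \<Rightarrow> 'a set \<Rightarrow> ('a \<Rightarrow> 'a \<Rightarrow> complex) set" where
  "PB sc invol \<Gamma> mul P B = {\<phi>. ips_form sc invol \<Gamma> mul B \<phi> \<and>
     (\<exists>p. seminorm sc p \<and> continuous_map (seminorm_topology P) euclideanreal p \<and>
          (\<forall>x y. cmod (\<phi> x y) \<le> p x * p y))}"

definition pos_cone :: "('a \<Rightarrow> 'a) \<Rightarrow> ('a \<Rightarrow> 'a \<Rightarrow> 'a::ab_group_add) \<Rightarrow> ('a \<Rightarrow> real) set \<Rightarrow> 'a set \<Rightarrow> 'a set" where
  "pos_cone invol mul P S = (seminorm_topology P) closure_of
     {(\<Sum>k<n. mul (invol (f k)) (f k)) | (n::nat) f. \<forall>k<n. f k \<in> S}"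

definition posB :: "('a \<Rightarrow> 'a) \<Rightarrow> ('a \<Rightarrow> 'a \<Rightarrow> 'a::ab_group_add) \<Rightarrow> ('a \<Rightarrow> real) set \<Rightarrow> 'a set \<Rightarrow> 'a set" where "posB invol mul P B = pos_cone invol mul P B"
definition pos_top :: "('a \<Rightarrow> 'a) \<Rightarrow> ('a \<times> 'a) set \<Rightarrow> ('a \<Rightarrow> 'a \<Rightarrow> 'a::ab_group_add) \<Rightarrow> ('a \<Rightarrow> real) set \<Rightarrow> 'a set" where "pos_top invol \<Gamma> mul P = pos_cone invol mul P (RM \<Gamma>)"

definition pos_M :: "('a \<Rightarrow> 'a \<Rightarrow> 'a) \<Rightarrow> 'a set \<Rightarrow> ('a \<Rightarrow> 'a \<Rightarrow> complex) set \<Rightarrow> 'a set" where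
  "pos_M mul B M = {x. \<forall>\<phi>\<in>M. \<forall>a\<in>B. 0 \<le> \<phi> (mul x a) a}"

end

theory Submission
  imports Defs
begin

lemma istop_snt:
  fixes P :: "('a::ab_group_add \<Rightarrow> real) set"
  shows "istopology (\<lambda>U. \<forall>x\<in>U. \<exists>F. finite F \<and> F \<subseteq> P \<and> (\<exists>e>0. {y. \<forall>p\<in>F. p (y - x) < e} \<subseteq> U))"
    unfolding istopology_def
  proof (intro conjI allI impI)
    fix S T :: "'a set"
    assume S: "\<forall>x\<in>S. \<exists>F. finite F \<and> F \<subseteq> P \<and> (\<exists>e>0. {y. \<forall>p\<in>F. p (y - x) < e} \<subseteq> S)"
      and T: "\<forall>x\<in>T. \<exists>F. finite F \<and> F \<subseteq> P \<and> (\<exists>e>0. {y. \<forall>p\<in>F. p (y - x) < e} \<subseteq> T)"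
    show "\<forall>x\<in>S \<inter> T. \<exists>F. finite F \<and> F \<subseteq> P \<and> (\<exists>e>0. {y. \<forall>p\<in>F. p (y - x) < e} \<subseteq> S \<inter> T)"
    proof
      fix x assume x: "x \<in> S \<inter> T"
      have xS: "x \<in> S" and xT: "x \<in> T" using x by simp_all
      have "\<exists>F. finite F \<and> F \<subseteq> P \<and> (\<exists>e>0. {y. \<forall>p\<in>F. p (y - x) < e} \<subseteq> S)"
        using S xS by (rule bspec)
      then obtain F1 e1 where 1: "finite F1" "F1 \<subseteq> P" "e1 > 0" "{y. \<forall>p\<in>F1. p (y - x) < e1} \<subseteq> S"
        by blast
      have "\<exists>F. finite F \<and> F \<subseteq> P \<and> (\<exists>e>0. {y. \<forall>p\<in>F. p (y - x) < e} \<subseteq> T)"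
        using T xT by (rule bspec)
      then obtain F2 e2 where 2: "finite F2" "F2 \<subseteq> P" "e2 > 0" "{y. \<forall>p\<in>F2. p (y - x) < e2} \<subseteq> T"
        by blast
      show "\<exists>F. finite F \<and> F \<subseteq> P \<and> (\<exists>e>0. {y. \<forall>p\<in>F. p (y - x) < e} \<subseteq> S \<inter> T)"
      proof (intro exI conjI)
        show "finite (F1 \<union> F2)" using 1 2 by simp
        show "F1 \<union> F2 \<subseteq> P" using 1 2 by simp
        show "min e1 e2 > 0" using 1 2 by simp
        show "{y. \<forall>p\<in>F1 \<union> F2. p (y - x) < min e1 e2} \<subseteq> S \<inter> T"
        proof
          fix y assume y: "y \<in> {y. \<forall>p\<in>F1 \<union> F2. p (y - x) < min e1 e2}"
          have a: "\<forall>p\<in>F1 \<union> F2. p (y - x) < min e1 e2" using y by simp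
          have "y \<in> {y. \<forall>p\<in>F1. p (y - x) < e1}"
          proof (intro CollectI ballI)
            fix p assume "p \<in> F1"
            then have "p (y - x) < min e1 e2" using a by simp
            then show "p (y - x) < e1" by simp
          qed
          moreover have "y \<in> {y. \<forall>p\<in>F2. p (y - x) < e2}"
          proof (intro CollectI ballI)
            fix p assume "p \<in> F2"
            then have "p (y - x) < min e1 e2" using a by simp
            then show "p (y - x) < e2" by simp
          qed
          ultimately show "y \<in> S \<inter> T" using 1(4) 2(4) by (simp only: IntI subsetD)
        qed
      qed
    qed
  next
    fix K :: "'a set set"
    assume H: "\<forall>S\<in>K. \<forall>x\<in>S. \<exists>F. finite F \<and> F \<subseteq> P \<and> (\<exists>e>0. {y. \<forall>p\<in>F. p (y - x) < e} \<subseteq> S)"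
    show "\<forall>x\<in>\<Union> K. \<exists>F. finite F \<and> F \<subseteq> P \<and> (\<exists>e>0. {y. \<forall>p\<in>F. p (y - x) < e} \<subseteq> \<Union> K)"
    proof (intro ballI)
      fix x assume "x \<in> \<Union> K"
      then obtain S where S: "S \<in> K" "x \<in> S" by (rule UnionE)
      have "\<exists>F. finite F \<and> F \<subseteq> P \<and> (\<exists>e>0. {y. \<forall>p\<in>F. p (y - x) < e} \<subseteq> S)"
        using H S(1) S(2) by simp
      then obtain F e where Fe: "finite F" "F \<subseteq> P" "e > 0" "{y. \<forall>p\<in>F. p (y - x) < e} \<subseteq> S"
        by blast
      have "S \<subseteq> \<Union> K" by (rule Union_upper[OF S(1)])
      then have "{y. \<forall>p\<in>F. p (y - x) < e} \<subseteq> \<Union> K" using Fe(4) by (rule subset_trans[rotated])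
      then show "\<exists>F. finite F \<and> F \<subseteq> P \<and> (\<exists>e>0. {y. \<forall>p\<in>F. p (y - x) < e} \<subseteq> \<Union> K)"
        using Fe(1-3) by blast
    qed
  qed

lemma openin_snt:
  "openin (seminorm_topology P) U \<longleftrightarrow> (\<forall>x\<in>U. \<exists>F. finite F \<and> F \<subseteq> P \<and>
       (\<exists>e>0. {y. \<forall>p\<in>F. p (y - x) < e} \<subseteq> U))"
  unfolding seminorm_topology_def topology_inverse'[OF istop_snt[of P]] by (rule refl)

lemma topspace_snt[simp]: "topspace (seminorm_topology P) = UNIV"
proof -
  have "openin (seminorm_topology P) UNIV" unfolding openin_snt
  proof
    fix x :: 'a
    show "\<exists>F. finite F \<and> F \<subseteq> P \<and> (\<exists>e>0. {y. \<forall>p\<in>F. p (y - x) < e} \<subseteq> UNIV)"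
      by (rule exI[of _ "{}"]) (simp add: exI[of _ 1])
  qed
  then show ?thesis by (simp add: openin_subset subset_antisym)
qed

lemma cont_transl: "continuous_map (seminorm_topology P) (seminorm_topology P) (\<lambda>y. y - c)"
  unfolding continuous_map_def
proof (intro conjI allI impI)
  fix U assume U: "openin (seminorm_topology P) U"
  show "openin (seminorm_topology P) {x \<in> topspace (seminorm_topology P). x - c \<in> U}"
    unfolding openin_snt
  proof
    fix x assume "x \<in> {x \<in> topspace (seminorm_topology P). x - c \<in> U}"
    then have xc: "x - c \<in> U" by simp
    have "\<exists>F. finite F \<and> F \<subseteq> P \<and> (\<exists>e>0. {y. \<forall>p\<in>F. p (y - (x - c)) < e} \<subseteq> U)"
      using U[unfolded openin_snt] xc by (rule bspec)
    then obtain F e where F: "finite F" "F \<subseteq> P" "e>0" "{y. \<forall>p\<in>F. p (y - (x - c)) < e} \<subseteq> U"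
      by blast
    show "\<exists>F. finite F \<and> F \<subseteq> P \<and> (\<exists>e>0. {y. \<forall>p\<in>F. p (y - x) < e} \<subseteq> {x \<in> topspace (seminorm_topology P). x - c \<in> U})"
    proof (intro exI[of _ F] conjI exI[of _ e])
      show "{y. \<forall>p\<in>F. p (y - x) < e} \<subseteq> {x \<in> topspace (seminorm_topology P). x - c \<in> U}"
      proof
        fix y assume "y \<in> {y. \<forall>p\<in>F. p (y - x) < e}"
        moreover have "y - c - (x - c) = y - x" by (simp add: algebra_simps)
        ultimately have "y - c \<in> {y. \<forall>p\<in>F. p (y - (x - c)) < e}" by simp
        then show "y \<in> {x \<in> topspace (seminorm_topology P). x - c \<in> U}" using F(4) by auto
      qed
    qed (use F in \<open>simp_all\<close>)
  qed
qed simp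

lemma cvs_0: "cvs sc \<Longrightarrow> sc 0 x = 0"
proof -
  assume "cvs sc"
  then have "sc (0 + 0) x = sc 0 x + sc 0 x" unfolding cvs_def by blast
  then have "sc 0 x + 0 = sc 0 x + sc 0 x" by simp
  then show ?thesis by (simp only: add_left_cancel)
qed

lemma cvs_1: "cvs sc \<Longrightarrow> sc 1 x = x"
  unfolding cvs_def by blast

lemma cvs_m1: "cvs sc \<Longrightarrow> sc (-1) x = - x"
proof -
  assume c: "cvs sc"
  have "sc (1 + -1) x = sc 1 x + sc (-1) x" using c unfolding cvs_def by blast
  then have "0 = x + sc (-1) x" by (simp only: cvs_0[OF c] cvs_1[OF c] add.right_inverse)
  then show ?thesis by (metis add.commute add_eq_0_iff)
qed

lemma mul_add_left:
  assumes "partial_star_algebra sc invol \<Gamma> mul" "a \<in> RM \<Gamma>"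
  shows "mul (u + v) a = mul u a + mul v a"
proof -
  have c: "cvs sc" using assms(1) unfolding partial_star_algebra_def by blast
  have g: "(u,a) \<in> \<Gamma>" "(v,a) \<in> \<Gamma>" using assms(2) unfolding RM_def by auto
  have "mul (sc 1 u + sc 1 v) a = sc 1 (mul u a) + sc 1 (mul v a)"
    using assms(1) g unfolding partial_star_algebra_def by blast
  then show ?thesis by (simp only: cvs_1[OF c])
qed

lemma mul_0_left:
  assumes "partial_star_algebra sc invol \<Gamma> mul" "a \<in> RM \<Gamma>"
  shows "mul 0 a = 0"
  using mul_add_left[OF assms, of 0 0] by simp

lemma phi_add:
  assumes "ips_form sc invol \<Gamma> mul B \<phi>" "cvs sc"
  shows "\<phi> (u + v) z = \<phi> u z + \<phi> v z"
proof -
  have L: "\<forall>a b x y z. \<phi> (sc a x + sc b y) z = a * \<phi> x z + b * \<phi> y z"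
    using assms(1) unfolding ips_form_def by (rule conjunct1)
  have "\<phi> (sc 1 u + sc 1 v) z = 1 * \<phi> u z + 1 * \<phi> v z"
    using L[rule_format, of 1 u 1 v z] .
  then show ?thesis by (simp add: cvs_1[OF assms(2)])
qed

lemma phi_diff:
  assumes "ips_form sc invol \<Gamma> mul B \<phi>" "cvs sc"
  shows "\<phi> (u - v) z = \<phi> u z - \<phi> v z"
proof -
  have L: "\<forall>a b x y z. \<phi> (sc a x + sc b y) z = a * \<phi> x z + b * \<phi> y z"
    using assms(1) unfolding ips_form_def by (rule conjunct1)
  have "\<phi> (sc 1 u + sc (-1) v) z = 1 * \<phi> u z + (-1) * \<phi> v z"
    using L[rule_format, of 1 u "-1" v z] .
  then show ?thesis by (simp add: cvs_1[OF assms(2)] cvs_m1[OF assms(2)])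
qed

lemma phi_0:
  assumes "ips_form sc invol \<Gamma> mul B \<phi>" "cvs sc"
  shows "\<phi> 0 z = 0"
  using phi_add[OF assms, of 0 0] by simp

theorem proposition5p7:
  fixes sc :: "complex \<Rightarrow> 'a::ab_group_add \<Rightarrow> 'a"
    and invol :: "'a \<Rightarrow> 'a" and \<Gamma> :: "('a \<times> 'a) set" and mul :: "'a \<Rightarrow> 'a \<Rightarrow> 'a"
    and P :: "('a \<Rightarrow> real) set" and B :: "'a set"
  assumes "top_partial_star_algebra sc invol \<Gamma> mul P"
    and "semi_associative \<Gamma> mul"
    and "multiplication_core sc invol \<Gamma> mul P B"
  shows "posB invol mul P B \<subseteq> pos_top invol \<Gamma> mul P \<and>
         (\<forall>M. M \<subseteq> PB sc invol \<Gamma> mul P B \<longrightarrow> pos_top invol \<Gamma> mul P \<subseteq> pos_M mul B M)"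
proof
  have BR: "B \<subseteq> RM \<Gamma>" using assms(3) unfolding multiplication_core_def by blast
  have psa: "partial_star_algebra sc invol \<Gamma> mul" using assms(1) unfolding top_partial_star_algebra_def by blast
  have c: "cvs sc" using psa unfolding partial_star_algebra_def by blast
  have ii: "\<And>x. invol (invol x) = x" using psa unfolding partial_star_algebra_def by blast
  have inv_mul: "\<And>x y. (x, y) \<in> \<Gamma> \<Longrightarrow> invol (mul x y) = mul (invol y) (invol x)"
    using psa unfolding partial_star_algebra_def by blast
  define S where "S T = {(\<Sum>k<n. mul (invol (f k)) (f k)) | (n::nat) f. \<forall>k<n. f k \<in> T}" for T
  show "posB invol mul P B \<subseteq> pos_top invol \<Gamma> mul P"
    unfolding posB_def pos_top_def pos_cone_def
    apply (rule closure_of_mono)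
    using BR by blast
  show "\<forall>M. M \<subseteq> PB sc invol \<Gamma> mul P B \<longrightarrow> pos_top invol \<Gamma> mul P \<subseteq> pos_M mul B M"
  proof (intro allI impI subsetI)
    fix M x assume M: "M \<subseteq> PB sc invol \<Gamma> mul P B" and x: "x \<in> pos_top invol \<Gamma> mul P"
    show "x \<in> pos_M mul B M" unfolding pos_M_def
    proof (intro CollectI ballI)
      fix \<phi> a assume phiM: "\<phi> \<in> M" and aB: "a \<in> B"
      have aR: "a \<in> RM \<Gamma>" using aB BR by blast
      obtain p where ips: "ips_form sc invol \<Gamma> mul B \<phi>" and p: "seminorm sc p"
        "continuous_map (seminorm_topology P) euclideanreal p" "\<And>x y. cmod (\<phi> x y) \<le> p x * p y"
        using phiM M unfolding PB_def by blast
      define h where "h y = \<phi> (mul y a) a" for y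
      have sq: "0 \<le> h (mul (invol y) y)" if yR: "y \<in> RM \<Gamma>" for y
      proof -
        have g: "(invol y, y) \<in> \<Gamma>" using yR unfolding RM_def by blast
        have L: "\<forall>x y. (x, y) \<in> \<Gamma> \<longrightarrow> (\<forall>a\<in>B. \<forall>b\<in>B. \<phi> (mul (invol x) a) (mul y b) = \<phi> a (mul (mul x y) b))"
          using ips unfolding ips_form_def by blast
        have 1: "\<phi> (mul y a) (mul y a) = \<phi> a (mul (mul (invol y) y) a)"
          using L[rule_format, OF g aB aB] ii by simp
        have 2: "\<phi> (mul (mul (invol y) y) a) a = \<phi> a (mul (invol (mul (invol y) y)) a)"
          using ips aB unfolding ips_form_def by blast
        have 3: "invol (mul (invol y) y) = mul (invol y) y" using inv_mul[OF g] ii by simp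
        have "0 \<le> \<phi> (mul y a) (mul y a)" using ips unfolding ips_form_def by blast
        then show ?thesis unfolding h_def using 1 2 3 by simp
      qed
      have sums: "0 \<le> h (\<Sum>k<n. mul (invol (f k)) (f k))" if "\<forall>k<n. f k \<in> RM \<Gamma>" for n :: nat and f
        using that
      proof (induction n)
        case 0
        then show ?case unfolding h_def using mul_0_left[OF psa aR] phi_0[OF ips c] by simp
      next
        case (Suc n)
        have "h (\<Sum>k<Suc n. mul (invol (f k)) (f k)) = h (\<Sum>k<n. mul (invol (f k)) (f k)) + h (mul (invol (f n)) (f n))"
          unfolding h_def by (simp add: mul_add_left[OF psa aR] phi_add[OF ips c])
        moreover have "0 \<le> h (mul (invol (f n)) (f n))" using sq Suc.prems by simp
        ultimately show ?case using Suc by simp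
      qed
      show "0 \<le> \<phi> (mul x a) a"
      proof (rule ccontr)
        assume neg: "\<not> 0 \<le> \<phi> (mul x a) a"
        define e where "e = (if Im (h x) \<noteq> 0 then \<bar>Im (h x)\<bar> else - Re (h x))"
        have e0: "e > 0" using neg unfolding e_def h_def by (auto simp: less_eq_complex_def)
        have far: "cmod (z - h x) \<ge> e" if "0 \<le> z" for z
        proof (cases "Im (h x) \<noteq> 0")
          case True
          then show ?thesis using that abs_Im_le_cmod[of "z - h x"] unfolding e_def
            by (auto simp: less_eq_complex_def)
        next
          case False
          then show ?thesis using that abs_Re_le_cmod[of "z - h x"] unfolding e_def
            by (auto simp: less_eq_complex_def)
        qed
        have mc: "continuous_map (seminorm_topology P) (seminorm_topology P) (\<lambda>y. mul y a)"
          using assms(3) aB unfolding multiplication_core_def by blast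
        have qc: "continuous_map (seminorm_topology P) euclideanreal (\<lambda>y. p (mul y a - mul x a))"
          using continuous_map_compose[OF continuous_map_compose[OF mc cont_transl] p(2)]
          by (simp add: o_def)
        define T where "T = {y \<in> topspace (seminorm_topology P). p (mul y a - mul x a) \<in> {t. t * p a < e}}"
        have opT: "openin (seminorm_topology P) T"
          unfolding T_def
          apply (rule openin_continuous_map_preimage[OF qc])
          by (simp add: open_Collect_less continuous_intros)
        have "p (sc 0 x) = cmod 0 * p x" using p(1) unfolding seminorm_def by blast
        then have p0: "p 0 = 0" using cvs_0[OF c] by simp
        have xT: "x \<in> T" unfolding T_def using e0 p0 by simp
        have "x \<in> (seminorm_topology P) closure_of S (RM \<Gamma>)"
          using x unfolding pos_top_def pos_cone_def S_def by simp
        then obtain y where yT: "y \<in> T" and yS: "y \<in> S (RM \<Gamma>)"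
          using opT xT unfolding closure_of_def by blast
        have hy: "0 \<le> h y" using yS sums unfolding S_def by blast
        have "h y - h x = \<phi> (mul y a - mul x a) a" unfolding h_def by (simp add: phi_diff[OF ips c])
        then have "cmod (h y - h x) \<le> p (mul y a - mul x a) * p a" using p(3) by simp
        also have "\<dots> < e" using yT unfolding T_def by simp
        finally show False using far[OF hy] by simp
      qed
    qed
  qed
qed

end
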